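(* For every integer $n\ge 4$, $px_{3,2}(K_n)=2$.
   Context: All graphs are finite, simple and undirected. An edge-coloring of a graph may assign the same color to adjacent edges. A tree $T$ in an edge-colored graph is a proper tree if no two adjacent edges of $T$ receive the same color. For $S\subseteq V(G)$ with $|S|\ge 2$, an $S$-tree is a tree in $G$ containing all vertices of $S$. $S$-trees $T_1,\dots,T_\ell$ are internally disjoint if $E(T_i)\cap E(T_j)=\emptyset$ and $V(T_i)\cap V(T_j)=S$ for all $i\ne j$. For a connected graph $G$ of order $n$ and integers $k,\ell$ with $2\le k\le n$ and $1\le \ell\le \kappa_k(G)$ (where $\kappa_k(G)$ is the minimum, over all $k$-subsets $S$ of $V(G)$, of the maximum number of internally disjoint $S$-trees), the $(k,\ell)$-proper index $px_{k,\ell}(G)$ is the minimum number of colors in an edge-coloring of $G$ such that for every $k$-subset $S$ of $V(G)$ there exist $\ell$ internally disjoint proper $S$-trees. *)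

theory Defs
  imports Main
begin

text \<open>A graph is given by a vertex set V and an edge set E of 2-element subsets of V.
An edge-colouring is a function col from edges to nat; it uses at most c colours
if every edge of G gets a colour < c.\<close>

definition tree_connected :: "'a set \<Rightarrow> 'a set set \<Rightarrow> bool" where
  "tree_connected VT ET \<longleftrightarrow>
     (\<forall>u\<in>VT. \<forall>v\<in>VT. (u, v) \<in> {(a, b). {a, b} \<in> ET}\<^sup>*)"

definition has_cycle :: "'a set set \<Rightarrow> bool" where
  "has_cycle ET \<longleftrightarrow>
     (\<exists>xs. length xs \<ge> 3 \<and> distinct xs \<and>
        (\<forall>i<length xs. {xs ! i, xs ! ((i + 1) mod length xs)} \<in> ET))"

definition is_tree_in :: "'a set \<Rightarrow> 'a set set \<Rightarrow> 'a set \<Rightarrow> 'a set set \<Rightarrow> bool" where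
  "is_tree_in V E VT ET \<longleftrightarrow>
     VT \<subseteq> V \<and> ET \<subseteq> E \<and> VT \<noteq> {} \<and> (\<forall>e\<in>ET. e \<subseteq> VT) \<and>
     tree_connected VT ET \<and> \<not> has_cycle ET"

definition proper_edges :: "('a set \<Rightarrow> nat) \<Rightarrow> 'a set set \<Rightarrow> bool" where
  "proper_edges col ET \<longleftrightarrow>
     (\<forall>e\<in>ET. \<forall>f\<in>ET. e \<noteq> f \<and> e \<inter> f \<noteq> {} \<longrightarrow> col e \<noteq> col f)"

definition has_disjoint_proper_S_trees ::
  "'a set \<Rightarrow> 'a set set \<Rightarrow> ('a set \<Rightarrow> nat) \<Rightarrow> 'a set \<Rightarrow> nat \<Rightarrow> bool" where
  "has_disjoint_proper_S_trees V E col S l \<longleftrightarrow>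
     (\<exists>T :: nat \<Rightarrow> 'a set \<times> 'a set set.
        (\<forall>i<l. is_tree_in V E (fst (T i)) (snd (T i)) \<and> S \<subseteq> fst (T i)
               \<and> proper_edges col (snd (T i))) \<and>
        (\<forall>i<l. \<forall>j<l. i \<noteq> j \<longrightarrow>
               snd (T i) \<inter> snd (T j) = {} \<and> fst (T i) \<inter> fst (T j) = S))"

definition proper_index :: "nat \<Rightarrow> nat \<Rightarrow> 'a set \<Rightarrow> 'a set set \<Rightarrow> nat" where
  "proper_index k l V E =
     (LEAST c. \<exists>col :: 'a set \<Rightarrow> nat. (\<forall>e\<in>E. col e < c) \<and>
        (\<forall>S. S \<subseteq> V \<and> card S = k \<longrightarrow> has_disjoint_proper_S_trees V E col S l))"

definition K_vertices :: "nat \<Rightarrow> nat set" where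
  "K_vertices n = {0..<n}"

definition K_edges :: "nat \<Rightarrow> nat set set" where
  "K_edges n = {e. e \<subseteq> {0..<n} \<and> card e = 2}"

end

theory Submission
  imports Defs
begin

fun pedges :: "'a list \<Rightarrow> 'a set set" where
  "pedges (x#y#zs) = insert {x,y} (pedges (y#zs))"
| "pedges _ = {}"

fun alt :: "('a set \<Rightarrow> nat) \<Rightarrow> 'a list \<Rightarrow> bool" where
  "alt col (x#y#z#zs) = (col {x,y} \<noteq> col {y,z} \<and> alt col (y#z#zs))"
| "alt col _ = True"

fun edges_in :: "'a set set \<Rightarrow> 'a list \<Rightarrow> bool" where
  "edges_in E (x#y#zs) = ({x,y} \<in> E \<and> edges_in E (y#zs))"
| "edges_in E _ = True"

lemma pedges_sub: "e \<in> pedges xs \<Longrightarrow> e \<subseteq> set xs"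
  by (induction xs rule: pedges.induct) auto

lemma pedges_end:
  assumes "distinct (x#xs)" "e \<in> pedges (x#xs)" "x \<in> e"
  shows "xs \<noteq> [] \<and> e = {x, hd xs}"
proof (cases xs)
  case Nil thus ?thesis using assms by simp
next
  case (Cons y zs)
  show ?thesis
  proof (cases "e = {x,y}")
    case True thus ?thesis using Cons by simp
  next
    case False
    then have "e \<in> pedges (y#zs)" using assms Cons by simp
    then have "e \<subseteq> set (y#zs)" by (rule pedges_sub)
    then show ?thesis using assms Cons by auto
  qed
qed

lemma edges_in_sub: "edges_in E xs \<Longrightarrow> pedges xs \<subseteq> E"
  by (induction xs rule: pedges.induct) auto

definition Rel :: "'a set set \<Rightarrow> ('a \<times> 'a) set" where
  "Rel ET = {(a,b). {a,b} \<in> ET}"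

lemma Rel_sym: "(u,v) \<in> (Rel ET)\<^sup>* \<Longrightarrow> (v,u) \<in> (Rel ET)\<^sup>*"
proof (induction rule: rtrancl_induct)
  case base thus ?case by simp
next
  case (step y z)
  then have "(z,y) \<in> Rel ET" by (simp add: Rel_def insert_commute)
  thus ?case using step by (meson converse_rtrancl_into_rtrancl)
qed

lemma Rel_mono: "A \<subseteq> B \<Longrightarrow> (Rel A)\<^sup>* \<subseteq> (Rel B)\<^sup>*"
  by (rule rtrancl_mono) (auto simp: Rel_def)

lemma hd_reach: "xs \<noteq> [] \<Longrightarrow> v \<in> set xs \<Longrightarrow> (hd xs, v) \<in> (Rel (pedges xs))\<^sup>*"
proof (induction xs arbitrary: v rule: pedges.induct)
  case (1 x y zs)
  have xy: "(x,y) \<in> Rel (pedges (x#y#zs))" by (simp add: Rel_def)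
  show ?case
  proof (cases "v = x")
    case True thus ?thesis by simp
  next
    case False
    then have "(y, v) \<in> (Rel (pedges (y#zs)))\<^sup>*" using 1 by simp
    then have "(y, v) \<in> (Rel (pedges (x#y#zs)))\<^sup>*"
      using Rel_mono[of "pedges (y#zs)" "pedges (x#y#zs)"] by auto
    thus ?thesis using xy by (simp add: converse_rtrancl_into_rtrancl)
  qed
qed auto

lemma path_connected: "xs \<noteq> [] \<Longrightarrow> tree_connected (set xs) (pedges xs)"
  unfolding tree_connected_def
proof (intro ballI)
  fix u v assume a: "xs \<noteq> []" "u \<in> set xs" "v \<in> set xs"
  have 1: "(hd xs, u) \<in> (Rel (pedges xs))\<^sup>*" using hd_reach[OF a(1,2)] .
  have 2: "(hd xs, v) \<in> (Rel (pedges xs))\<^sup>*" using hd_reach[OF a(1,3)] .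
  have "(u,v) \<in> (Rel (pedges xs))\<^sup>*" using rtrancl_trans[OF Rel_sym[OF 1] 2] .
  thus "(u, v) \<in> {(a, b). {a, b} \<in> pedges xs}\<^sup>*" by (simp add: Rel_def)
qed

lemma path_proper: "distinct xs \<Longrightarrow> alt col xs \<Longrightarrow> proper_edges col (pedges xs)"
proof (induction xs rule: pedges.induct)
  case (1 x y zs)
  have IH: "proper_edges col (pedges (y#zs))"
    using 1 by (cases zs) auto
  have key: "col {x,y} \<noteq> col f" if "f \<in> pedges (y#zs)" "f \<noteq> {x,y}" "f \<inter> {x,y} \<noteq> {}" for f
  proof -
    have "f \<subseteq> set (y#zs)" using that pedges_sub by blast
    then have "x \<notin> f" using 1 by auto
    then have "y \<in> f" using that by auto
    then have "zs \<noteq> [] \<and> f = {y, hd zs}" using pedges_end[of y zs f] 1 that by auto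
    then obtain z zs' where "zs = z#zs'" "f = {y,z}" by (cases zs) auto
    thus ?thesis using 1 by simp
  qed
  show ?case unfolding proper_edges_def
  proof (intro ballI impI)
    fix e f assume ef: "e \<in> pedges (x#y#zs)" "f \<in> pedges (x#y#zs)" "e \<noteq> f \<and> e \<inter> f \<noteq> {}"
    show "col e \<noteq> col f"
    proof (cases "e = {x,y}")
      case True
      then have "f \<in> pedges (y#zs)" using ef by auto
      thus ?thesis using key[of f] ef True by auto
    next
      case False
      then have e: "e \<in> pedges (y#zs)" using ef by auto
      show ?thesis
      proof (cases "f = {x,y}")
        case True thus ?thesis using key[of e] ef e by (metis inf_commute)
      next
        case False
        then have "f \<in> pedges (y#zs)" using ef by auto
        thus ?thesis using IH e ef unfolding proper_edges_def by blast
      qed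
    qed
  qed
qed (auto simp: proper_edges_def)

lemma no_cycle_empty: "\<not> has_cycle {}"
  unfolding has_cycle_def by (force dest: spec[of _ 0])

lemma path_acyclic: "distinct xs \<Longrightarrow> \<not> has_cycle (pedges xs)"
proof (induction xs)
  case Nil thus ?case using no_cycle_empty by simp
next
  case (Cons x xs')
  show ?case
  proof (cases xs')
    case Nil
    thus ?thesis using no_cycle_empty by simp
  next
    case (Cons y zs)
    show ?thesis
    proof
      assume "has_cycle (pedges (x#xs'))"
      then obtain cs where cs: "length cs \<ge> 3" "distinct cs"
        "\<forall>i<length cs. {cs ! i, cs ! ((i + 1) mod length cs)} \<in> pedges (x#xs')"
        unfolding has_cycle_def by blast
      show False
      proof (cases "x \<in> set cs")
        case True
        then obtain i where i: "i < length cs" "cs ! i = x" by (meson in_set_conv_nth)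
        define j where "j = (if i = 0 then length cs - 1 else i - 1)"
        define k where "k = (i + 1) mod length cs"
        have L3: "length cs \<ge> 3" using cs(1) .
        have jL: "j < length cs" "(j + 1) mod length cs = i" using i L3 unfolding j_def by auto
        have kL: "k < length cs" using i unfolding k_def by (metis less_nat_zero_code mod_less_divisor neq0_conv)
        have kk: "k = (if i + 1 < length cs then i + 1 else 0)"
        proof (cases "i + 1 < length cs")
          case True thus ?thesis unfolding k_def by simp
        next
          case False then have "i + 1 = length cs" using i by simp
          thus ?thesis unfolding k_def by simp
        qed
        have jk: "j \<noteq> k" "j \<noteq> i" "k \<noteq> i" using i L3 unfolding j_def kk
          by auto
        have "{cs ! j, cs ! ((j + 1) mod length cs)} \<in> pedges (x#xs')" using cs(3) jL(1) by blast
        then have e1: "{cs ! j, x} \<in> pedges (x#xs')" using jL(2) i(2) by simp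
        have e2: "{x, cs ! k} \<in> pedges (x#xs')" using cs(3) i unfolding k_def by blast
        have "xs' \<noteq> [] \<and> {cs ! j, x} = {x, hd xs'}"
          using pedges_end[OF Cons.prems] e1 by blast
        then have "cs ! j = y \<or> cs ! j = x" using Cons by (auto simp: doubleton_eq_iff)
        moreover have "cs ! j \<noteq> x" using nth_eq_iff_index_eq[OF cs(2) jL(1) i(1)] jk(2) i(2) by simp
        ultimately have cj: "cs ! j = y" by simp
        have "xs' \<noteq> [] \<and> {x, cs ! k} = {x, hd xs'}"
          using pedges_end[OF Cons.prems] e2 by blast
        then have "cs ! k = y \<or> cs ! k = x" using Cons by (auto simp: doubleton_eq_iff)
        moreover have "cs ! k \<noteq> x" using nth_eq_iff_index_eq[OF cs(2) kL i(1)] jk(3) i(2) by simp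
        ultimately have "cs ! k = y" by simp
        then have "cs ! j = cs ! k" using cj by simp
        thus False using nth_eq_iff_index_eq[OF cs(2) jL(1) kL] jk(1) by simp
      next
        case False
        have "\<forall>i<length cs. {cs ! i, cs ! ((i + 1) mod length cs)} \<in> pedges xs'"
        proof (intro allI impI)
          fix i assume "i < length cs"
          then have m: "{cs ! i, cs ! ((i + 1) mod length cs)} \<in> pedges (x#y#zs)"
            using cs(3) Cons by simp
          have "(i + 1) mod length cs < length cs" using \<open>i < length cs\<close> by (metis less_nat_zero_code mod_less_divisor neq0_conv)
          then have "cs ! i \<noteq> x" "cs ! ((i + 1) mod length cs) \<noteq> x"
            using False \<open>i < length cs\<close> nth_mem by metis+
          then have "{cs ! i, cs ! ((i + 1) mod length cs)} \<noteq> {x,y}" by (auto simp: doubleton_eq_iff)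
          thus "{cs ! i, cs ! ((i + 1) mod length cs)} \<in> pedges xs'" using m Cons by simp
        qed
        then have "has_cycle (pedges xs')" unfolding has_cycle_def using cs by blast
        thus False using Cons.IH Cons.prems by simp
      qed
    qed
  qed
qed

lemma path_tree:
  assumes "distinct xs" "xs \<noteq> []" "set xs \<subseteq> V" "edges_in E xs"
  shows "is_tree_in V E (set xs) (pedges xs)"
  unfolding is_tree_in_def
proof (intro conjI)
  show "pedges xs \<subseteq> E" using assms(4) by (rule edges_in_sub)
  show "\<forall>e\<in>pedges xs. e \<subseteq> set xs" using pedges_sub by blast
  show "tree_connected (set xs) (pedges xs)" using assms(2) by (rule path_connected)
  show "\<not> has_cycle (pedges xs)" using assms(1) by (rule path_acyclic)
qed (use assms in auto)

lemma two_paths: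
  assumes "distinct xs1" "xs1 \<noteq> []" "set xs1 \<subseteq> V" "edges_in E xs1" "alt col xs1" "S \<subseteq> set xs1"
    and "distinct xs2" "xs2 \<noteq> []" "set xs2 \<subseteq> V" "edges_in E xs2" "alt col xs2" "S \<subseteq> set xs2"
    and "set xs1 \<inter> set xs2 = S" "\<forall>e\<in>pedges xs1. e \<notin> pedges xs2"
  shows "has_disjoint_proper_S_trees V E col S 2"
proof -
  define T where "T = (\<lambda>i::nat. if i = 0 then (set xs1, pedges xs1) else (set xs2, pedges xs2))"
  have t1: "is_tree_in V E (set xs1) (pedges xs1)" using assms(1-4) by (rule path_tree)
  have t2: "is_tree_in V E (set xs2) (pedges xs2)" using assms(7-10) by (rule path_tree)
  have p1: "proper_edges col (pedges xs1)" using assms(1,5) by (rule path_proper)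
  have p2: "proper_edges col (pedges xs2)" using assms(7,11) by (rule path_proper)
  have d: "pedges xs1 \<inter> pedges xs2 = {}" using assms(14) by blast
  have A: "\<forall>i<2. is_tree_in V E (fst (T i)) (snd (T i)) \<and> S \<subseteq> fst (T i) \<and> proper_edges col (snd (T i))"
  proof (intro allI impI)
    fix i :: nat assume "i < 2"
    show "is_tree_in V E (fst (T i)) (snd (T i)) \<and> S \<subseteq> fst (T i) \<and> proper_edges col (snd (T i))"
    proof (cases "i = 0")
      case True thus ?thesis using t1 p1 assms(6) unfolding T_def by simp
    next
      case False thus ?thesis using t2 p2 assms(12) unfolding T_def by simp
    qed
  qed
  have B: "\<forall>i<2. \<forall>j<2. i \<noteq> j \<longrightarrow> snd (T i) \<inter> snd (T j) = {} \<and> fst (T i) \<inter> fst (T j) = S"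
  proof (intro allI impI)
    fix i j :: nat assume "i < 2" "j < 2" "i \<noteq> j"
    then have "(i = 0 \<and> j = 1) \<or> (i = 1 \<and> j = 0)" by auto
    then show "snd (T i) \<inter> snd (T j) = {} \<and> fst (T i) \<inter> fst (T j) = S"
    proof
      assume "i = 0 \<and> j = 1" thus ?thesis using d assms(13) unfolding T_def by simp
    next
      assume "i = 1 \<and> j = 0" thus ?thesis using d assms(13) unfolding T_def by (simp add: Int_commute)
    qed
  qed
  show ?thesis unfolding has_disjoint_proper_S_trees_def using A B by blast
qed

definition col2 :: "nat set \<Rightarrow> nat" where
  "col2 e = (if \<exists>i. e = {i, Suc i} then 1 else 0)"

lemma col2_eq: "col2 {p, q} = (if p = Suc q \<or> q = Suc p then 1 else 0)"
  unfolding col2_def by (auto simp: doubleton_eq_iff)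


lemma E: "{p,q} \<in> K_edges n \<longleftrightarrow> p \<noteq> q \<and> p < n \<and> q < n" for p q :: nat
    unfolding K_edges_def by (auto simp: card_insert_if)

lemma good_sorted:
  assumes "n \<ge> 4" "a < b" "b < c" "c < n"
  shows "has_disjoint_proper_S_trees (K_vertices n) (K_edges n) col2 {a,b,c} 2"
proof -
  note simps = E K_vertices_def col2_eq doubleton_eq_iff
  consider "b \<noteq> Suc a" "c \<noteq> Suc b" | "b = Suc a" "c \<noteq> Suc b" | "b \<noteq> Suc a" "c = Suc b"
    | "b = Suc a" "c = Suc b" "a \<ge> 1" | "a = 0" "b = 1" "c = 2" by linarith
  then show ?thesis
  proof cases
    case 1
    show ?thesis
      apply (rule two_paths[of "[b,a,Suc a,c]" _ _ _ _ "[b,c,c-1,a]"])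
      using assms 1 apply (simp_all add: simps insert_commute) by auto
  next
    case 2
    show ?thesis
      apply (rule two_paths[of "[b,a,c]" _ _ _ _ "[b,c,c-1,a]"])
      using assms 2 apply (simp_all add: simps insert_commute) by auto
  next
    case 3
    show ?thesis
      apply (rule two_paths[of "[a,c,b]" _ _ _ _ "[b,a,Suc a,c]"])
      using assms 3 apply (simp_all add: simps insert_commute) done
  next
    case 4
    show ?thesis
      apply (rule two_paths[of "[b,a,c]" _ _ _ _ "[b,c,a-1,a]"])
      using assms 4 apply (simp_all add: simps insert_commute) by auto
  next
    case 5
    show ?thesis
      apply (rule two_paths[of "[a,c,b]" _ _ _ _ "[c,3,a,b]"])
      using assms 5 apply (simp_all add: simps insert_commute) done
  qed
qed

lemma good_any:
  assumes "n \<ge> 4" "x \<noteq> y" "y \<noteq> z" "x \<noteq> z" "x < n" "y < n" "z < n"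
  shows "has_disjoint_proper_S_trees (K_vertices n) (K_edges n) col2 {x,y,z} 2"
proof -
  consider "x < y" "y < z" | "x < z" "z < y" | "y < x" "x < z" | "y < z" "z < x"
    | "z < x" "x < y" | "z < y" "y < x" using assms by linarith
  then show ?thesis
  proof cases
    case 1 thus ?thesis using good_sorted[of n x y z] assms by simp
  next
    case 2 thus ?thesis using good_sorted[of n x z y] assms by (simp add: insert_commute)
  next
    case 3 thus ?thesis using good_sorted[of n y x z] assms by (simp add: insert_commute)
  next
    case 4 thus ?thesis using good_sorted[of n y z x] assms by (simp add: insert_commute)
  next
    case 5 thus ?thesis using good_sorted[of n z x y] assms by (simp add: insert_commute)
  next
    case 6 thus ?thesis using good_sorted[of n z y x] assms by (simp add: insert_commute)
  qed
qed

lemma matching_reach: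
  assumes "\<forall>e\<in>ET. card e = 2" "\<forall>e\<in>ET. \<forall>f\<in>ET. e \<noteq> f \<longrightarrow> e \<inter> f = {}"
    and "(u,v) \<in> {(a,b). {a,b} \<in> ET}\<^sup>*"
  shows "u = v \<or> {u,v} \<in> ET"
  using assms(3)
proof (induction rule: rtrancl_induct)
  case base thus ?case by simp
next
  case (step y z)
  then have yz: "{y,z} \<in> ET" by simp
  show ?case
  proof (cases "u = y")
    case True thus ?thesis using yz by simp
  next
    case False
    then have uy: "{u,y} \<in> ET" using step by simp
    have "y \<in> {u,y} \<inter> {y,z}" by simp
    then have ne: "{u,y} \<inter> {y,z} \<noteq> {}" by (metis empty_iff)
    have imp: "{u,y} \<noteq> {y,z} \<longrightarrow> {u,y} \<inter> {y,z} = {}"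
      using bspec[OF bspec[OF assms(2) uy] yz] .
    have "{u,y} = {y,z}" using imp ne by (metis (no_types))
    then show ?thesis using False by (auto simp: doubleton_eq_iff)
  qed
qed

lemma lower:
  assumes "is_tree_in V E VT ET" "\<forall>e\<in>E. card e = 2" "\<forall>e\<in>E. col e = (0::nat)"
    "proper_edges col ET" "{a,b,c} \<subseteq> VT" "a \<noteq> b" "b \<noteq> c" "a \<noteq> c"
  shows False
proof -
  have ET: "ET \<subseteq> E" "tree_connected VT ET" using assms(1) unfolding is_tree_in_def by auto
  have c2: "\<forall>e\<in>ET. card e = 2" using ET assms(2) by auto
  have m: "\<forall>e\<in>ET. \<forall>f\<in>ET. e \<noteq> f \<longrightarrow> e \<inter> f = {}"
  proof (intro ballI impI)
    fix e f assume ef: "e \<in> ET" "f \<in> ET" "e \<noteq> f"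
    have "col e = 0" "col f = 0" using ef ET(1) assms(3) by auto
    show "e \<inter> f = {}"
    proof (rule ccontr)
      assume "e \<inter> f \<noteq> {}"
      then have "col e \<noteq> col f" using assms(4) ef unfolding proper_edges_def by blast
      thus False using \<open>col e = 0\<close> \<open>col f = 0\<close> by simp
    qed
  qed
  have "(a,b) \<in> {(x,y). {x,y} \<in> ET}\<^sup>*" "(b,c) \<in> {(x,y). {x,y} \<in> ET}\<^sup>*"
    using ET(2) assms(5) unfolding tree_connected_def by auto
  then have "a = b \<or> {a,b} \<in> ET" "b = c \<or> {b,c} \<in> ET" using matching_reach[OF c2 m] by auto
  then have ab: "{a,b} \<in> ET" and bc: "{b,c} \<in> ET" using assms(6,7) by auto
  have "{a,b} \<noteq> {b,c}" using assms(6-8) by (auto simp: doubleton_eq_iff)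
  then have "{a,b} \<inter> {b,c} = {}" using bspec[OF bspec[OF m ab] bc] by simp
  thus False by simp
qed

theorem theorem2p4:
  fixes n :: nat
  assumes "n \<ge> 4"
  shows "proper_index 3 2 (K_vertices n) (K_edges n) = 2"
  unfolding proper_index_def
proof (rule Least_equality)
  show "\<exists>col. (\<forall>e\<in>K_edges n. col e < 2) \<and>
          (\<forall>S. S \<subseteq> K_vertices n \<and> card S = 3 \<longrightarrow>
               has_disjoint_proper_S_trees (K_vertices n) (K_edges n) col S 2)"
  proof (intro exI[of _ col2] conjI allI impI ballI)
    fix e show "col2 e < 2" by (simp add: col2_def)
  next
    fix S assume S: "S \<subseteq> K_vertices n \<and> card S = 3"
    then obtain x y z where "S = {x,y,z}" "x \<noteq> y" "y \<noteq> z" "x \<noteq> z"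
      by (auto simp: card_3_iff)
    moreover have "x < n" "y < n" "z < n" using S calculation by (auto simp: K_vertices_def)
    ultimately show "has_disjoint_proper_S_trees (K_vertices n) (K_edges n) col2 S 2"
      using good_any assms by simp
  qed
next
  fix c assume "\<exists>col. (\<forall>e\<in>K_edges n. col e < c) \<and>
          (\<forall>S. S \<subseteq> K_vertices n \<and> card S = 3 \<longrightarrow>
               has_disjoint_proper_S_trees (K_vertices n) (K_edges n) col S 2)"
  then obtain col where col: "\<forall>e\<in>K_edges n. col e < c"
    "\<forall>S. S \<subseteq> K_vertices n \<and> card S = 3 \<longrightarrow>
               has_disjoint_proper_S_trees (K_vertices n) (K_edges n) col S 2" by blast
  show "2 \<le> c"
  proof (rule ccontr)
    assume "\<not> 2 \<le> c"
    then have c0: "\<forall>e\<in>K_edges n. col e = 0" using col(1) by fastforce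
    have "{0,1,2} \<subseteq> K_vertices n \<and> card {0::nat,1,2} = 3" using assms by (auto simp: K_vertices_def)
    then have "has_disjoint_proper_S_trees (K_vertices n) (K_edges n) col {0,1,2} 2" using col(2) by blast
    then obtain T where "\<forall>i<(2::nat). is_tree_in (K_vertices n) (K_edges n) (fst (T i)) (snd (T i)) \<and> {0,1,2} \<subseteq> fst (T i)
               \<and> proper_edges col (snd (T i))"
      unfolding has_disjoint_proper_S_trees_def by blast
    then have t: "is_tree_in (K_vertices n) (K_edges n) (fst (T 0)) (snd (T 0))" and s: "{0,1,2} \<subseteq> fst (T 0)"
      and p: "proper_edges col (snd (T 0))" by auto
    have k2: "\<forall>e\<in>K_edges n. card e = 2" by (simp add: K_edges_def)
    show False using lower[OF t k2 c0 p s] by simp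
  qed
qed

end
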